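(* Let $h:Q\to P$ be an $\iota$-map of positive opetopes, $k\ge0$, $q\in Q_{k+2}$ and $q'\in\delta(q)$ such that $h(q),h(q')\in P_k$. Then $h(q')=h(\gamma(q))$.
   Context: A positive hypergraph $S$ consists of finite sets $S_k$ ($k\in\mathbb{N}$), only finitely many nonempty, functions $\gamma:S_{k+1}\to S_k$, and for each $k$ an assignment $\delta$ sending each $a\in S_{k+1}$ to a nonempty subset $\delta(a)\subseteq S_k$, with $\delta(a)$ a singleton for $a\in S_1$. A face is identified with its singleton; $\gamma(X)=\{\gamma(a):a\in X\}$, $\delta(X)=\bigcup_{a\in X}\delta(a)$. For $k>0$ the lower order $<^-$ on $S_k$ is the transitive closure of: $a\lhd b$ iff $\gamma(a)\in\delta(b)$. The upper order $<^+$ on $S_k$ is the transitive closure of: $a\lhd b$ iff there is $\alpha\in S_{k+1}$ with $a\in\delta(\alpha)$, $\gamma(\alpha)=b$; $a\perp^{\pm}b$ iff $a<^{\pm}b$ or $b<^{\pm}a$. A positive opetopic cardinal: $S_0\ne\emptyset$; globularity ($\gamma\gamma(a)=\gamma\delta(a)-\delta\delta(a)$, $\delta\gamma(a)=\delta\delta(a)-\gamma\delta(a)$ for $\dim a\ge2$); each $<^+$ a strict order, linear on $S_0$; for $k>0$, $\perp^-\cap\perp^+=\emptyset$ on $S_k$; for $x\in S_{k-1}$, $\{a:\gamma(a)=x\}$ and $\{a:x\in\delta(a)\}$ linearly ordered by $<^+$. A positive opetope: additionally $|P_m-\delta(P_{m+1})|\le1$ for all $m$. $\gamma^{(k)}(p)=p$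 if $\dim p\le k$, else $\gamma^{(k)}(p)=\gamma(\gamma^{(k+1)}(p))$. An $\iota$-map $h:Q\to P$ of positive opetopes is a function on faces with: $\dim h(q)\le\dim q$; $h(\gamma^{(k)}(q))=\gamma^{(k)}(h(q))$ for $k\ge0$, $q\in Q_{k+1}$; and, with $\ker(h)=\{q:\dim q>\dim h(q)\}$, for $q\in Q_{k+1}$: if $\dim h(q)=k+1$, $h$ restricts to a bijection $\delta(q)-\ker(h)\to\delta(h(q))$; if $\dim h(q)=k$, to a bijection $\delta(q)-\ker(h)\to\{h(q)\}$; if $\dim h(q)<k$, $\delta(q)\subseteq\ker(h)$. *)

theory Defs
  imports Main
begin

text \<open>A positive hypergraph: a finite set of faces, each with a dimension;
  for faces of dimension k+1 a codomain face gam a of dimension k and a nonempty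
  set of domain faces del a of dimension k (a singleton when k = 0).
  The values of gam/del on faces of dimension 0 are irrelevant.\<close>

record 'a phg =
  faces :: "'a set"
  dm    :: "'a \<Rightarrow> nat"
  gam   :: "'a \<Rightarrow> 'a"
  del   :: "'a \<Rightarrow> 'a set"

definition lev :: "'a phg \<Rightarrow> nat \<Rightarrow> 'a set" where
  "lev S k = {a \<in> faces S. dm S a = k}"

definition gamS :: "'a phg \<Rightarrow> 'a set \<Rightarrow> 'a set" where
  "gamS S X = gam S ` X"

definition delS :: "'a phg \<Rightarrow> 'a set \<Rightarrow> 'a set" where
  "delS S X = (\<Union>a\<in>X. del S a)"

definition pos_hypergraph :: "'a phg \<Rightarrow> bool" where
  "pos_hypergraph S \<longleftrightarrow> finite (faces S) \<and>
     (\<forall>k. \<forall>a\<in>lev S (Suc k). gam S a \<in> lev S k \<and> del S a \<noteq> {} \<and> del S a \<subseteq> lev S k) \<and>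
     (\<forall>a\<in>lev S 1. \<exists>b. del S a = {b})"

definition lower_gen :: "'a phg \<Rightarrow> ('a \<times> 'a) set" where
  "lower_gen S = {(a,b). \<exists>k>0. a \<in> lev S k \<and> b \<in> lev S k \<and> gam S a \<in> del S b}"

definition upper_gen :: "'a phg \<Rightarrow> ('a \<times> 'a) set" where
  "upper_gen S = {(a,b). \<exists>k. a \<in> lev S k \<and> b \<in> lev S k \<and>
      (\<exists>\<alpha>\<in>lev S (Suc k). a \<in> del S \<alpha> \<and> gam S \<alpha> = b)}"

definition lower_ord :: "'a phg \<Rightarrow> ('a \<times> 'a) set" where
  "lower_ord S = (lower_gen S)\<^sup>+"

definition upper_ord :: "'a phg \<Rightarrow> ('a \<times> 'a) set" where
  "upper_ord S = (upper_gen S)\<^sup>+"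

definition comparable :: "('a \<times> 'a) set \<Rightarrow> 'a \<Rightarrow> 'a \<Rightarrow> bool" where
  "comparable r a b \<longleftrightarrow> (a,b) \<in> r \<or> (b,a) \<in> r"

definition pos_opetopic_cardinal :: "'a phg \<Rightarrow> bool" where
  "pos_opetopic_cardinal S \<longleftrightarrow> pos_hypergraph S \<and>
     lev S 0 \<noteq> {} \<and>
     (\<forall>a\<in>faces S. 2 \<le> dm S a \<longrightarrow>
        {gam S (gam S a)} = gamS S (del S a) - delS S (del S a) \<and>
        del S (gam S a) = delS S (del S a) - gamS S (del S a)) \<and>
     irrefl (upper_ord S) \<and>
     total_on (lev S 0) (upper_ord S) \<and>
     (\<forall>k>0. \<forall>a\<in>lev S k. \<forall>b\<in>lev S k.
        \<not> (comparable (lower_ord S) a b \<and> comparable (upper_ord S) a b)) \<and>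
     (\<forall>k. \<forall>x\<in>lev S k.
        total_on {a\<in>lev S (Suc k). gam S a = x} (upper_ord S) \<and>
        total_on {a\<in>lev S (Suc k). x \<in> del S a} (upper_ord S))"

definition pos_opetope :: "'a phg \<Rightarrow> bool" where
  "pos_opetope P \<longleftrightarrow> pos_opetopic_cardinal P \<and>
     (\<forall>m. card (lev P m - delS P (lev P (Suc m))) \<le> 1)"

function gamk :: "'a phg \<Rightarrow> nat \<Rightarrow> 'a \<Rightarrow> 'a" where
  "gamk S k p = (if dm S p \<le> k then p else gam S (gamk S (Suc k) p))"
  by auto
termination by (relation "measure (\<lambda>(S,k,p). dm S p - k)") auto

declare gamk.simps [simp del]

definition ker :: "'a phg \<Rightarrow> 'b phg \<Rightarrow> ('a \<Rightarrow> 'b) \<Rightarrow> 'a set" where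
  "ker Q P h = {q \<in> faces Q. dm P (h q) < dm Q q}"

definition iota_map :: "'a phg \<Rightarrow> 'b phg \<Rightarrow> ('a \<Rightarrow> 'b) \<Rightarrow> bool" where
  "iota_map Q P h \<longleftrightarrow> pos_opetope Q \<and> pos_opetope P \<and>
     h ` faces Q \<subseteq> faces P \<and>
     (\<forall>q\<in>faces Q. dm P (h q) \<le> dm Q q) \<and>
     (\<forall>k. \<forall>q\<in>lev Q (Suc k). h (gamk Q k q) = gamk P k (h q)) \<and>
     (\<forall>k. \<forall>q\<in>lev Q (Suc k).
        (dm P (h q) = Suc k \<longrightarrow> bij_betw h (del Q q - ker Q P h) (del P (h q))) \<and>
        (dm P (h q) = k \<longrightarrow> bij_betw h (del Q q - ker Q P h) {h q}) \<and>
        (dm P (h q) < k \<longrightarrow> del Q q \<subseteq> ker Q P h))"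

end

theory Submission
  imports Defs
begin

lemma gamk_le: "dm S p \<le> k \<Longrightarrow> gamk S k p = p"
  by (simp add: gamk.simps)

lemma gamk_suc: "dm S p = Suc k \<Longrightarrow> gamk S k p = gam S p"
  by (simp add: gamk.simps[of S k p] gamk_le)

theorem mainTheorem8:
  fixes Q :: "'a phg" and P :: "'b phg" and h :: "'a \<Rightarrow> 'b" and k :: nat
  assumes "iota_map Q P h"
    and "q \<in> lev Q (Suc (Suc k))"
    and "q' \<in> del Q q"
    and "h q \<in> lev P k" and "h q' \<in> lev P k"
  shows "h q' = h (gam Q q)"
proof -
  have io: "pos_opetope Q" "h ` faces Q \<subseteq> faces P"
    "\<forall>q\<in>faces Q. dm P (h q) \<le> dm Q q"
    "\<forall>k. \<forall>q\<in>lev Q (Suc k). h (gamk Q k q) = gamk P k (h q)"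
    "\<forall>k. \<forall>q\<in>lev Q (Suc k).
        (dm P (h q) = Suc k \<longrightarrow> bij_betw h (del Q q - ker Q P h) (del P (h q))) \<and>
        (dm P (h q) = k \<longrightarrow> bij_betw h (del Q q - ker Q P h) {h q}) \<and>
        (dm P (h q) < k \<longrightarrow> del Q q \<subseteq> ker Q P h)"
    using assms(1) unfolding iota_map_def by auto
  have oc: "pos_opetopic_cardinal Q" using io(1) unfolding pos_opetope_def by auto
  have hg: "pos_hypergraph Q" using oc unfolding pos_opetopic_cardinal_def by auto
  have lev1: "\<And>j a. a \<in> lev Q (Suc j) \<Longrightarrow> gam Q a \<in> lev Q j \<and> del Q a \<subseteq> lev Q j"
    using hg unfolding pos_hypergraph_def by blast
  have fin: "finite (faces Q)" using hg unfolding pos_hypergraph_def by auto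
  have irr: "irrefl (upper_ord Q)" using oc unfolding pos_opetopic_cardinal_def by auto
  have glob: "{gam Q (gam Q q)} = gamS Q (del Q q) - delS Q (del Q q)"
    using oc assms(2) unfolding pos_opetopic_cardinal_def lev_def by auto
  have qfaces: "q \<in> faces Q" "dm Q q = Suc (Suc k)" using assms(2) by (auto simp: lev_def)
  have hq: "dm P (h q) = k" using assms(4) by (auto simp: lev_def)
  have gq: "gam Q q \<in> lev Q (Suc k)" and dq: "del Q q \<subseteq> lev Q (Suc k)"
    using lev1 assms(2) by auto
  have ggq: "gam Q (gam Q q) \<in> lev Q k" using lev1 gq by auto
  have h1: "h (gam Q q) = h q"
    using io(4) assms(2) qfaces hq
    by (metis gamk_suc gamk_le le_Suc_eq order_refl)
  have dmgq: "dm Q (gam Q q) = Suc k" using gq by (auto simp: lev_def)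
  have h2: "h (gam Q (gam Q q)) = h q"
    using io(4) gq h1 hq dmgq by (metis gamk_suc gamk_le order_refl)
  have dker: "del Q q \<subseteq> ker Q P h" using io(5) assms(2) hq by auto
  define R where "R = {r \<in> del Q q. dm P (h r) = k \<and> h r = h q'}"
  have q'R: "q' \<in> R" using assms(3,5) by (auto simp: R_def lev_def)
  have hgr: "h (gam Q r) = h r" if "r \<in> R" for r
  proof -
    have rl: "r \<in> lev Q (Suc k)" using that dq by (auto simp: R_def)
    hence "dm Q r = Suc k" by (auto simp: lev_def)
    thus ?thesis using io(4) rl that by (metis (mono_tags, lifting) R_def gamk_suc gamk_le
        mem_Collect_eq order_refl)
  qed
  have propg: "r' \<in> R" if rR: "r \<in> R" and r'd: "r' \<in> del Q q" and gr: "gam Q r \<in> del Q r'" for r r'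
  proof -
    have rl: "r \<in> lev Q (Suc k)" using rR dq by (auto simp: R_def)
    have r'l: "r' \<in> lev Q (Suc k)" using r'd dq by auto
    have grl: "gam Q r \<in> lev Q k" using lev1 rl by auto
    have grk: "gam Q r \<notin> ker Q P h" using hgr[OF rR] rR grl by (auto simp: ker_def R_def lev_def)
    have "r' \<in> ker Q P h" using dker r'd by auto
    hence lt: "dm P (h r') < Suc k" using r'l by (auto simp: ker_def lev_def)
    have "\<not> dm P (h r') < k" using io(5) r'l grk gr by blast
    hence eq: "dm P (h r') = k" using lt by auto
    hence "bij_betw h (del Q r' - ker Q P h) {h r'}" using io(5) r'l by blast
    hence "h (gam Q r) = h r'" using gr grk by (auto simp: bij_betw_def)
    thus ?thesis using eq r'd hgr[OF rR] rR by (auto simp: R_def)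
  qed
  have step: "\<exists>r'\<in>R. (gam Q r, gam Q r') \<in> upper_ord Q"
    if rR: "r \<in> R" and ne: "gam Q r \<noteq> gam Q (gam Q q)" for r
  proof -
    have "gam Q r \<in> gamS Q (del Q q)" using rR by (auto simp: R_def gamS_def)
    hence "gam Q r \<in> delS Q (del Q q)" using glob ne by blast
    then obtain r' where r'd: "r' \<in> del Q q" and gr: "gam Q r \<in> del Q r'"
      by (auto simp: delS_def)
    have r'R: "r' \<in> R" using propg rR r'd gr by blast
    have rl: "r \<in> lev Q (Suc k)" using rR dq by (auto simp: R_def)
    have r'l: "r' \<in> lev Q (Suc k)" using r'd dq by auto
    have "(gam Q r, gam Q r') \<in> upper_gen Q"
      unfolding upper_gen_def using lev1[OF rl] lev1[OF r'l] r'l gr by blast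
    thus ?thesis using r'R unfolding upper_ord_def by blast
  qed
  have ufin: "finite (upper_ord Q)"
  proof -
    have "upper_gen Q \<subseteq> faces Q \<times> faces Q" by (auto simp: upper_gen_def lev_def)
    hence "finite (upper_gen Q)" using fin by (meson finite_SigmaI finite_subset)
    thus ?thesis unfolding upper_ord_def by (simp add: finite_trancl)
  qed
  have acyc: "acyclic (upper_ord Q)"
    using irr unfolding acyclic_def upper_ord_def irrefl_def by simp
  have wf: "wf ((upper_ord Q)\<inverse>)" using finite_acyclic_wf_converse[OF ufin acyc] .
  have "gam Q q' \<in> gam Q ` R" using q'R by auto
  then obtain z where zin: "z \<in> gam Q ` R" and zmax: "\<And>y. (y, z) \<in> (upper_ord Q)\<inverse> \<Longrightarrow> y \<notin> gam Q ` R"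
    using wf unfolding wf_eq_minimal by metis
  then obtain r where rR: "r \<in> R" and zr: "z = gam Q r" by auto
  have "gam Q r = gam Q (gam Q q)"
  proof (rule ccontr)
    assume "gam Q r \<noteq> gam Q (gam Q q)"
    then obtain r' where "r' \<in> R" "(gam Q r, gam Q r') \<in> upper_ord Q" using step rR by blast
    thus False using zmax zr by auto
  qed
  hence "h q' = h q" using hgr[OF rR] rR h2 by (auto simp: R_def)
  thus ?thesis using h1 by simp
qed

end
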